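(* Let $X$ be a topological space, $p=(p_1,\ldots,p_n):X\to\mathbb{R}^n$ a continuous function, and $(C^*_\sigma)_{\sigma\in\mathcal{S}^n}$ a family of sets such that: (1) $C^*_\sigma\subset X$ for all $\sigma\in\mathcal{S}^n$; (2) $C^*_\sigma$ is $(n-|\operatorname{dom}\sigma|-1)$-connected for all $\sigma\in\mathcal{S}^n$; (3) if $\sigma_1\subset\sigma_2$ then $C^*_{\sigma_1}\supset C^*_{\sigma_2}$; (4) $\sigma(i)\,p_i(y)\ge 0$ for all $\sigma\in\mathcal{S}^n$, all $i\in\operatorname{dom}\sigma$ and all $y\in C^*_\sigma$. Then there is $y\in C^*_\emptyset$ with $p(y)=0$.
   Context: $\mathcal{S}^n$ denotes the set of all partial functions $\sigma:[n]\to\{-1,+1\}$ (including the empty function $\emptyset$), with domain $\operatorname{dom}\sigma$; $\sigma_1\subset\sigma_2$ means $\sigma_2$ extends $\sigma_1$. A space is $k$-connected ($k\ge -1$) if it is nonempty and every continuous map $S^j\to$ the space, $0\le j\le k$, extends to the ball $B^{j+1}$; in particular $(-1)$-connected means nonempty. *)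

theory Defs
  imports "HOL-Analysis.Analysis"
begin

text \<open>Closed unit ball B^(n+1) in R^(n+1) (coordinates 0..n), whose boundary is nsphere n = S^n.\<close>
definition nball :: "nat \<Rightarrow> (nat \<Rightarrow> real) topology" where
  "nball n \<equiv> subtopology (Euclidean_space (Suc n)) {x. (\<Sum>i\<le>n. x i ^ 2) \<le> 1}"

definition k_connected :: "'a topology \<Rightarrow> int \<Rightarrow> 'a set \<Rightarrow> bool" where
  "k_connected X k S \<longleftrightarrow> S \<noteq> {} \<and>
     (\<forall>j::nat. int j \<le> k \<longrightarrow>
        (\<forall>f. continuous_map (nsphere j) (subtopology X S) f \<longrightarrow>
           (\<exists>g. continuous_map (nball j) (subtopology X S) g \<and>
                (\<forall>x\<in>topspace (nsphere j). g x = f x))))"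

definition signvecs :: "nat \<Rightarrow> (nat \<rightharpoonup> int) set" where
  "signvecs n = {\<sigma>. dom \<sigma> \<subseteq> {1..n} \<and> ran \<sigma> \<subseteq> {-1, 1}}"

end

theory Submission
  imports Defs "HOL-Homology.Homology"
begin


abbreviation PT :: "(nat \<Rightarrow> real) topology" where "PT \<equiv> powertop_real UNIV"

definition jsph :: "nat set \<Rightarrow> (nat \<Rightarrow> real) set" where
  "jsph J = {x. (\<Sum>i\<in>J. x i ^ 2) = 1 \<and> (\<forall>i. i \<notin> J \<longrightarrow> x i = 0)}"
definition jball :: "nat set \<Rightarrow> (nat \<Rightarrow> real) set" where
  "jball J = {x. (\<Sum>i\<in>J. x i ^ 2) \<le> 1 \<and> (\<forall>i. i \<notin> J \<longrightarrow> x i = 0)}"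

lemma topspace_PT_sub [simp]: "topspace (subtopology PT S) = S"
  by (simp add: topspace_product_topology)

lemma cm_proj [continuous_intros]: "continuous_map PT euclideanreal (\<lambda>x. x i)"
  by (metis UNIV_I continuous_map_product_projection)

lemma cm_proj_sub [continuous_intros]: "continuous_map (subtopology PT S) euclideanreal (\<lambda>x. x i)"
  by (simp add: cm_proj continuous_map_from_subtopology)

lemma cm_into_PT:
  assumes "\<And>i. continuous_map T euclideanreal (\<lambda>x. f x i)" "\<And>x. x \<in> topspace T \<Longrightarrow> f x \<in> S"
  shows "continuous_map T (subtopology PT S) f"
  using assms by (auto simp: continuous_map_in_subtopology continuous_map_componentwise_UNIV)

lemma nsphere_eq: "nsphere j = subtopology PT (jsph {..j})"
proof -
  have "{x. \<forall>i\<ge>Suc j. x i = 0} \<inter> {x. (\<Sum>i\<le>j. (x i)\<^sup>2) = 1} = jsph {..j}"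
    by (auto simp: jsph_def not_le Suc_le_eq)
  then show ?thesis by (simp add: nsphere_def Euclidean_space_def subtopology_subtopology)
qed

lemma nball_eq: "nball j = subtopology PT (jball {..j})"
proof -
  have "{x. \<forall>i\<ge>Suc j. x i = 0} \<inter> {x. (\<Sum>i\<le>j. (x i)\<^sup>2) \<le> 1} = jball {..j}"
    by (auto simp: jball_def not_le Suc_le_eq)
  then show ?thesis by (simp add: nball_def Euclidean_space_def subtopology_subtopology)
qed

definition rx :: "(nat \<Rightarrow> nat) \<Rightarrow> nat set \<Rightarrow> (nat \<Rightarrow> real) \<Rightarrow> (nat \<Rightarrow> real)" where
  "rx h B x = (\<lambda>i. if i \<in> B then x (h i) else 0)"

lemma rx_sum: assumes "bij_betw h B A" shows "(\<Sum>i\<in>B. rx h B x i ^ 2) = (\<Sum>i\<in>A. x i ^ 2)"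
proof -
  have "(\<Sum>i\<in>B. rx h B x i ^ 2) = (\<Sum>i\<in>B. x (h i) ^ 2)" by (simp add: rx_def)
  also have "\<dots> = (\<Sum>i\<in>A. x i ^ 2)" using sum.reindex_bij_betw[OF assms, of "\<lambda>i. x i ^ 2"] by simp
  finally show ?thesis .
qed

lemma rx_cont: "continuous_map (subtopology PT S) PT (rx h B)"
  unfolding rx_def continuous_map_componentwise_UNIV
  by (auto intro: continuous_map_if cm_proj_sub)

lemma rx_sph: assumes "bij_betw h B A"
  shows "continuous_map (subtopology PT (jsph A)) (subtopology PT (jsph B)) (rx h B)"
  using rx_cont[of "jsph A" h B] rx_sum[OF assms]
  by (auto simp: continuous_map_in_subtopology jsph_def rx_def)

lemma rx_ball: assumes "bij_betw h B A"
  shows "continuous_map (subtopology PT (jball A)) (subtopology PT (jball B)) (rx h B)"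
  using rx_cont[of "jball A" h B] rx_sum[OF assms]
  by (auto simp: continuous_map_in_subtopology jball_def rx_def)

lemma rx_inv: assumes "bij_betw e A B" "\<forall>i. i \<notin> A \<longrightarrow> y i = 0"
  shows "rx e A (rx (inv_into A e) B y) = y"
  using assms by (auto simp: rx_def fun_eq_iff bij_betw_def inv_into_f_f)



lemma bij_card_pred:
  assumes "finite J" "J \<noteq> {}"
  obtains e where "bij_betw e {..card J - 1} J"
proof -
  obtain e where e: "bij_betw e {0..<card J} J" using ex_bij_betw_nat_finite[OF assms(1)] by blast
  have "card J > 0" using assms by auto
  then have eq: "{0..<card J} = {..card J - 1}" by auto
  show ?thesis using e unfolding eq by (rule that)
qed

lemma kconn_ext:
  assumes kc: "k_connected X k S" and fin: "finite J" and ne: "J \<noteq> {}" and kk: "int (card J) - 1 \<le> k"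
    and f: "continuous_map (subtopology PT (jsph J)) (subtopology X S) f"
  obtains g where "continuous_map (subtopology PT (jball J)) (subtopology X S) g" "\<forall>x\<in>jsph J. g x = f x"
proof -
  define j where "j = card J - 1"
  obtain e where e: "bij_betw e {..j} J" using bij_card_pred[OF fin ne] j_def by blast
  have ei: "bij_betw (inv_into {..j} e) J {..j}" by (simp add: bij_betw_inv_into e)
  have "card J \<ge> 1" using fin ne by (simp add: Suc_leI card_gt_0_iff)
  then have "int j = int (card J) - 1" unfolding j_def by linarith
  then have jj: "int j \<le> k" using kk by linarith
  have "continuous_map (nsphere j) (subtopology X S) (f \<circ> rx (inv_into {..j} e) J)"
    unfolding nsphere_eq by (rule continuous_map_compose[OF rx_sph[OF ei] f])
  moreover have "\<forall>f. continuous_map (nsphere j) (subtopology X S) f \<longrightarrow>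
           (\<exists>g. continuous_map (nball j) (subtopology X S) g \<and>
                (\<forall>x\<in>topspace (nsphere j). g x = f x))"
    using kc jj unfolding k_connected_def by simp
  ultimately obtain H where H: "continuous_map (nball j) (subtopology X S) H"
      "\<forall>x\<in>topspace (nsphere j). H x = (f \<circ> rx (inv_into {..j} e) J) x"
    by blast
  show ?thesis
  proof
    show "continuous_map (subtopology PT (jball J)) (subtopology X S) (H \<circ> rx e {..j})"
      using continuous_map_compose[OF rx_ball[OF e] H(1)[unfolded nball_eq]] .
    show "\<forall>x\<in>jsph J. (H \<circ> rx e {..j}) x = f x"
    proof
      fix x assume x: "x \<in> jsph J"
      have "rx e {..j} x \<in> jsph {..j}"
        using rx_sph[OF e] x by (auto simp: continuous_map_in_subtopology)
      then have "H (rx e {..j} x) = f (rx (inv_into {..j} e) J (rx e {..j} x))"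
        using H(2) by (simp add: nsphere_eq)
      also have "rx (inv_into {..j} e) J (rx e {..j} x) = x"
      proof (rule ext)
        fix i
        show "rx (inv_into {..j} e) J (rx e {..j} x) i = x i"
        proof (cases "i \<in> J")
          case True
          then have "i \<in> e ` {..j}" using e by (simp add: bij_betw_def)
          then have "inv_into {..j} e i \<in> {..j}" by (rule inv_into_into)
          then show ?thesis using True \<open>i \<in> e ` {..j}\<close> by (simp add: rx_def f_inv_into_f)
        next
          case False
          then show ?thesis using x by (simp add: rx_def jsph_def)
        qed
      qed
      finally show "(H \<circ> rx e {..j}) x = f x" by simp
    qed
  qed
qed

lemma noncontr_jsph:
  assumes fin: "finite J" and ne: "J \<noteq> {}"
  shows "\<not> contractible_space (subtopology PT (jsph J))"
proof
  assume c: "contractible_space (subtopology PT (jsph J))"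
  define j where "j = card J - 1"
  obtain e where e: "bij_betw e {..j} J" using bij_card_pred[OF fin ne] j_def by blast
  have ei: "bij_betw (inv_into {..j} e) J {..j}" by (simp add: bij_betw_inv_into e)
  have "retraction_maps (subtopology PT (jsph J)) (nsphere j) (rx e {..j}) (rx (inv_into {..j} e) J)"
    unfolding retraction_maps_def nsphere_eq
  proof (intro conjI ballI)
    show "continuous_map (subtopology PT (jsph J)) (subtopology PT (jsph {..j})) (rx e {..j})"
      by (rule rx_sph[OF e])
    show "continuous_map (subtopology PT (jsph {..j})) (subtopology PT (jsph J)) (rx (inv_into {..j} e) J)"
      by (rule rx_sph[OF ei])
    fix x assume "x \<in> topspace (subtopology PT (jsph {..j}))"
    then have "\<forall>i. i \<notin> {..j} \<longrightarrow> x i = 0" by (simp add: jsph_def)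
    then show "rx e {..j} (rx (inv_into {..j} e) J x) = x" by (rule rx_inv[OF e])
  qed
  then have "contractible_space (nsphere j)"
    using c contractible_space_retraction_map_image retraction_map_def by blast
  then show False using non_contractible_space_nsphere by blast
qed



definition mx :: "nat set \<Rightarrow> (nat \<Rightarrow> real) \<Rightarrow> real" where
  "mx J z = Max ((\<lambda>i. \<bar>z i\<bar>) ` J)"
definition nrm :: "nat set \<Rightarrow> (nat \<Rightarrow> real) \<Rightarrow> real" where
  "nrm J x = sqrt (\<Sum>i\<in>J. x i ^ 2)"
definition fc :: "nat set \<Rightarrow> (nat \<Rightarrow> real) \<Rightarrow> (nat \<Rightarrow> real) set" where
  "fc J c = {x. (\<forall>i\<in>J. \<bar>x i\<bar> \<le> 1) \<and> (\<forall>i. i \<notin> J \<longrightarrow> x i = c i)}"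
definition dfc :: "nat set \<Rightarrow> (nat \<Rightarrow> real) \<Rightarrow> (nat \<Rightarrow> real) set" where
  "dfc J c = {x \<in> fc J c. \<exists>i\<in>J. \<bar>x i\<bar> = 1}"

lemma cm_Max:
  assumes "finite J" "J \<noteq> {}" "\<And>i. i \<in> J \<Longrightarrow> continuous_map T euclideanreal (f i)"
  shows "continuous_map T euclideanreal (\<lambda>x. Max ((\<lambda>i. f i x) ` J))"
  using assms
proof (induction J rule: finite_ne_induct)
  case (singleton j)
  then show ?case by simp
next
  case (insert j F)
  have "continuous_map T euclideanreal (\<lambda>x. max (f j x) (Max ((\<lambda>i. f i x) ` F)))"
    using insert by (intro continuous_map_real_max) auto
  moreover have "\<And>x. Max ((\<lambda>i. f i x) ` insert j F) = max (f j x) (Max ((\<lambda>i. f i x) ` F))"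
    using insert by (simp add: Max_insert)
  ultimately show ?case by simp
qed

lemma cm_nrm: "finite J \<Longrightarrow> continuous_map (subtopology PT S) euclideanreal (nrm J)"
  unfolding nrm_def
  by (intro continuous_map_sqrt continuous_map_sum continuous_map_real_pow cm_proj_sub) auto

lemma cm_mx: "finite J \<Longrightarrow> J \<noteq> {} \<Longrightarrow> continuous_map (subtopology PT S) euclideanreal (mx J)"
  unfolding mx_def
  by (rule cm_Max[where f="\<lambda>i z. \<bar>z i\<bar>"]) (auto intro: continuous_map_real_abs cm_proj_sub)

lemma mx_props:
  assumes fin: "finite J" and ne: "J \<noteq> {}"
  shows "\<And>i. i \<in> J \<Longrightarrow> \<bar>z i\<bar> \<le> mx J z" "\<exists>i\<in>J. \<bar>z i\<bar> = mx J z"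
proof -
  show "\<And>i. i \<in> J \<Longrightarrow> \<bar>z i\<bar> \<le> mx J z" unfolding mx_def using fin by (auto intro: Max_ge)
  have "Max ((\<lambda>i. \<bar>z i\<bar>) ` J) \<in> (\<lambda>i. \<bar>z i\<bar>) ` J" using fin ne by (intro Max_in) auto
  then show "\<exists>i\<in>J. \<bar>z i\<bar> = mx J z" unfolding mx_def by force
qed

lemma mx_pos:
  assumes fin: "finite J" and ne: "J \<noteq> {}" and z: "z \<in> jsph J"
  shows "mx J z > 0"
proof (rule ccontr)
  assume "\<not> mx J z > 0"
  then have "\<forall>i\<in>J. z i = 0" using mx_props(1)[OF fin ne, of _ z] by force
  then show False using z by (simp add: jsph_def)
qed

definition psi :: "nat set \<Rightarrow> (nat \<Rightarrow> real) \<Rightarrow> (nat \<Rightarrow> real) \<Rightarrow> (nat \<Rightarrow> real)" where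
  "psi J c z = (\<lambda>i. if i \<in> J then z i / mx J z else c i)"
definition phi :: "nat set \<Rightarrow> (nat \<Rightarrow> real) \<Rightarrow> (nat \<Rightarrow> real)" where
  "phi J x = (\<lambda>i. if i \<in> J then x i / max 1 (nrm J x) else 0)"

lemma psi_cont:
  assumes fin: "finite J" and ne: "J \<noteq> {}"
  shows "continuous_map (subtopology PT (jsph J)) (subtopology PT (dfc J c)) (psi J c)"
proof (rule cm_into_PT)
  fix i
  show "continuous_map (subtopology PT (jsph J)) euclideanreal (\<lambda>x. psi J c x i)"
  proof (cases "i \<in> J")
    case True
    have "continuous_map (subtopology PT (jsph J)) euclideanreal (\<lambda>x. x i / mx J x)"
      by (rule continuous_map_real_divide[OF cm_proj_sub cm_mx[OF fin ne]])
        (metis mx_pos[OF fin ne] less_irrefl topspace_PT_sub)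
    then show ?thesis using True by (simp add: psi_def)
  next
    case False
    then show ?thesis by (simp add: psi_def)
  qed
next
  fix z assume "z \<in> topspace (subtopology PT (jsph J))"
  then have z: "z \<in> jsph J" by simp
  have m: "mx J z > 0" by (rule mx_pos[OF fin ne z])
  obtain i0 where i0: "i0 \<in> J" "\<bar>z i0\<bar> = mx J z" using mx_props(2)[OF fin ne] by blast
  have ab: "\<bar>z i / mx J z\<bar> = \<bar>z i\<bar> / mx J z" for i using m by (simp add: abs_divide)
  have le: "\<bar>psi J c z i\<bar> \<le> 1" if "i \<in> J" for i
  proof -
    have "\<bar>z i\<bar> \<le> mx J z" by (rule mx_props(1)[OF fin ne that])
    then show ?thesis using that m ab[of i] by (simp add: psi_def divide_le_eq_1_pos)
  qed
  have eq: "\<bar>psi J c z i0\<bar> = 1" using i0 m ab[of i0] by (simp add: psi_def)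
  have out: "psi J c z i = c i" if "i \<notin> J" for i using that by (simp add: psi_def)
  show "psi J c z \<in> dfc J c"
    unfolding dfc_def fc_def using le eq out i0(1) by blast
qed

lemma nrm_nonneg: "nrm J x \<ge> 0"
  unfolding nrm_def by (simp add: sum_nonneg)

lemma nrm_sq: "nrm J x ^ 2 = (\<Sum>i\<in>J. x i ^ 2)"
  unfolding nrm_def by (simp add: sum_nonneg)

lemma sum_scaled: "(\<Sum>i\<in>J. (x i / m) ^ 2) = (\<Sum>i\<in>J. x i ^ 2) / (m::real) ^ 2"
  by (simp add: power_divide sum_divide_distrib)

lemma phi_cont:
  assumes fin: "finite J"
  shows "continuous_map (subtopology PT (fc J c)) (subtopology PT (jball J)) (phi J)"
proof (rule cm_into_PT)
  fix i
  show "continuous_map (subtopology PT (fc J c)) euclideanreal (\<lambda>x. phi J x i)"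
    unfolding phi_def
    by (intro continuous_map_if continuous_map_real_divide cm_proj_sub continuous_map_real_max
         cm_nrm[OF fin] continuous_map_const[THEN iffD2]) auto
next
  fix x assume "x \<in> topspace (subtopology PT (fc J c))"
  define m where "m = max 1 (nrm J x)"
  have m1: "m \<ge> 1" "m \<ge> nrm J x" unfolding m_def by auto
  have "(\<Sum>i\<in>J. phi J x i ^ 2) = (\<Sum>i\<in>J. (x i / m) ^ 2)"
    unfolding phi_def m_def by simp
  also have "\<dots> = nrm J x ^ 2 / m ^ 2" by (simp add: sum_scaled nrm_sq)
  also have "\<dots> \<le> 1"
  proof -
    have "nrm J x ^ 2 \<le> m ^ 2" using m1 nrm_nonneg[of J x] by (intro power_mono) auto
    then show ?thesis using m1 by simp
  qed
  finally show "phi J x \<in> jball J" unfolding jball_def phi_def by auto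
qed

lemma phi_bdry:
  assumes fin: "finite J" and ne: "J \<noteq> {}" and x: "x \<in> dfc J c"
  shows "phi J x \<in> jsph J" "psi J c (phi J x) = x"
proof -
  have xf: "x \<in> fc J c" and "\<exists>i\<in>J. \<bar>x i\<bar> = 1" using x unfolding dfc_def by auto
  then obtain i0 where i0: "i0 \<in> J" "\<bar>x i0\<bar> = 1" by blast
  have xle: "\<And>i. i \<in> J \<Longrightarrow> \<bar>x i\<bar> \<le> 1" and xout: "\<And>i. i \<notin> J \<Longrightarrow> x i = c i"
    using xf unfolding fc_def by auto
  have "1 \<le> (\<Sum>i\<in>J. x i ^ 2)"
  proof -
    have "x i0 ^ 2 = 1" using i0(2) power2_abs[of "x i0"] by simp
    moreover have "x i0 ^ 2 \<le> (\<Sum>i\<in>J. x i ^ 2)"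
      using fin i0(1) by (intro member_le_sum) auto
    ultimately show ?thesis by simp
  qed
  then have n1: "nrm J x \<ge> 1" unfolding nrm_def by simp
  then have mm: "max 1 (nrm J x) = nrm J x" by simp
  have p: "phi J x = (\<lambda>i. if i \<in> J then x i / nrm J x else 0)" unfolding phi_def mm ..
  have "(\<Sum>i\<in>J. phi J x i ^ 2) = (\<Sum>i\<in>J. (x i / nrm J x) ^ 2)" unfolding p by simp
  also have "\<dots> = nrm J x ^ 2 / nrm J x ^ 2" by (simp only: sum_scaled nrm_sq)
  also have "\<dots> = 1" using n1 by simp
  finally have s1: "(\<Sum>i\<in>J. phi J x i ^ 2) = 1" .
  have "\<forall>i. i \<notin> J \<longrightarrow> phi J x i = 0" unfolding p by simp
  with s1 show "phi J x \<in> jsph J" unfolding jsph_def by blast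
  have ab: "\<bar>phi J x i\<bar> = \<bar>x i\<bar> / nrm J x" if "i \<in> J" for i
    using that n1 by (simp add: p abs_divide)
  have "mx J (phi J x) = 1 / nrm J x"
    unfolding mx_def
  proof (rule Max_eqI)
    show "finite ((\<lambda>i. \<bar>phi J x i\<bar>) ` J)" using fin by simp
    show "y \<le> 1 / nrm J x" if yy: "y \<in> (\<lambda>i. \<bar>phi J x i\<bar>) ` J" for y
    proof -
      obtain i where i: "i \<in> J" "y = \<bar>phi J x i\<bar>" using yy by blast
      have "\<bar>x i\<bar> / nrm J x \<le> 1 / nrm J x" using xle[OF i(1)] n1 by (intro divide_right_mono) auto
      then show ?thesis using i ab by simp
    qed
    show "1 / nrm J x \<in> (\<lambda>i. \<bar>phi J x i\<bar>) ` J"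
      using i0 ab[of i0] by (intro image_eqI[where x=i0]) auto
  qed
  then have mq: "mx J (phi J x) = 1 / nrm J x" .
  show "psi J c (phi J x) = x"
  proof (rule ext)
    fix i show "psi J c (phi J x) i = x i"
    proof (cases "i \<in> J")
      case True
      then have "psi J c (phi J x) i = phi J x i / mx J (phi J x)" by (simp add: psi_def)
      also have "\<dots> = (x i / nrm J x) / (1 / nrm J x)" unfolding mq using True by (simp add: p)
      also have "\<dots> = x i" using n1 by simp
      finally show ?thesis .
    next
      case False
      then show ?thesis by (simp add: psi_def xout)
    qed
  qed
qed

lemma face_ext:
  assumes fin: "finite J" and ne: "J \<noteq> {}"
    and ext: "\<And>f. continuous_map (subtopology PT (jsph J)) Y f \<Longrightarrow>
       \<exists>g. continuous_map (subtopology PT (jball J)) Y g \<and> (\<forall>x\<in>jsph J. g x = f x)"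
    and f: "continuous_map (subtopology PT (dfc J c)) Y f"
  shows "\<exists>g. continuous_map (subtopology PT (fc J c)) Y g \<and> (\<forall>x\<in>dfc J c. g x = f x)"
proof -
  have "continuous_map (subtopology PT (jsph J)) Y (f \<circ> psi J c)"
    by (rule continuous_map_compose[OF psi_cont[OF fin ne] f])
  then obtain H where H: "continuous_map (subtopology PT (jball J)) Y H" "\<forall>x\<in>jsph J. H x = (f \<circ> psi J c) x"
    using ext by blast
  show ?thesis
  proof (intro exI conjI ballI)
    show "continuous_map (subtopology PT (fc J c)) Y (H \<circ> phi J)"
      by (rule continuous_map_compose[OF phi_cont[OF fin] H(1)])
    fix x assume "x \<in> dfc J c"
    then show "(H \<circ> phi J) x = f x" using phi_bdry[OF fin ne] H(2) by simp
  qed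
qed



definition sgnv :: "nat \<Rightarrow> (nat \<Rightarrow> real) \<Rightarrow> (nat \<rightharpoonup> int)" where
  "sgnv n x = (\<lambda>i. if i \<in> {1..n} \<and> x i = 1 then Some 1
                  else if i \<in> {1..n} \<and> x i = -1 then Some (-1) else None)"
definition cval :: "(nat \<rightharpoonup> int) \<Rightarrow> nat \<Rightarrow> real" where
  "cval \<sigma> i = (case \<sigma> i of Some s \<Rightarrow> real_of_int s | None \<Rightarrow> 0)"
definition face :: "nat \<Rightarrow> (nat \<rightharpoonup> int) \<Rightarrow> (nat \<Rightarrow> real) set" where
  "face n \<sigma> = fc ({1..n} - dom \<sigma>) (cval \<sigma>)"
definition dface :: "nat \<Rightarrow> (nat \<rightharpoonup> int) \<Rightarrow> (nat \<Rightarrow> real) set" where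
  "dface n \<sigma> = dfc ({1..n} - dom \<sigma>) (cval \<sigma>)"

lemma signvecs_D: "\<sigma> \<in> signvecs n \<Longrightarrow> \<sigma> i = Some s \<Longrightarrow> i \<in> {1..n} \<and> (s = 1 \<or> s = -1)"
  unfolding signvecs_def by (auto simp: dom_def ran_def)

lemma signvecs_None: "\<sigma> \<in> signvecs n \<Longrightarrow> i \<notin> {1..n} \<Longrightarrow> \<sigma> i = None"
  unfolding signvecs_def by auto

lemma face_empty: "face n Map.empty = {x. (\<forall>i\<in>{1..n}. \<bar>x i\<bar> \<le> 1) \<and> (\<forall>i. i \<notin> {1..n} \<longrightarrow> x i = 0)}"
  by (simp add: face_def fc_def cval_def)

lemma sgnv_in: "sgnv n x \<in> signvecs n"
  unfolding signvecs_def sgnv_def by (auto simp: dom_def ran_def split: if_splits)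

lemma F1: assumes x: "x \<in> face n Map.empty" shows "x \<in> face n (sgnv n x)"
proof -
  have xb: "\<And>i. i \<in> {1..n} \<Longrightarrow> \<bar>x i\<bar> \<le> 1" and xo: "\<And>i. i \<notin> {1..n} \<Longrightarrow> x i = 0"
    using x by (auto simp: face_empty)
  have "x i = cval (sgnv n x) i" if "i \<notin> {1..n} - dom (sgnv n x)" for i
  proof (cases "i \<in> {1..n}")
    case True
    then have "i \<in> dom (sgnv n x)" using that by blast
    then show ?thesis using True by (auto simp: sgnv_def cval_def dom_def split: if_splits)
  next
    case False
    then show ?thesis using xo by (simp add: sgnv_def cval_def)
  qed
  then show ?thesis using xb unfolding face_def fc_def by auto
qed

lemma F2:
  assumes s: "\<sigma> \<in> signvecs n" and x: "x \<in> face n \<sigma>"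
  shows "x \<in> face n Map.empty" "\<sigma> \<subseteq>\<^sub>m sgnv n x"
proof -
  have xb: "\<And>i. i \<in> {1..n} - dom \<sigma> \<Longrightarrow> \<bar>x i\<bar> \<le> 1"
    and xo: "\<And>i. i \<notin> {1..n} - dom \<sigma> \<Longrightarrow> x i = cval \<sigma> i"
    using x by (auto simp: face_def fc_def)
  have vs: "x i = real_of_int s" if "\<sigma> i = Some s" for i s
  proof -
    have "i \<in> dom \<sigma>" using that by blast
    then show ?thesis using xo[of i] that by (simp add: cval_def)
  qed
  show "\<sigma> \<subseteq>\<^sub>m sgnv n x"
    unfolding map_le_def
  proof
    fix i assume "i \<in> dom \<sigma>"
    then obtain s where si: "\<sigma> i = Some s" by blast
    then have "i \<in> {1..n}" "s = 1 \<or> s = -1" using signvecs_D[OF s] by auto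
    then show "\<sigma> i = sgnv n x i" using vs[OF si] si by (auto simp: sgnv_def)
  qed
  show "x \<in> face n Map.empty"
    unfolding face_empty
  proof (intro CollectI conjI allI ballI impI)
    fix i assume i: "i \<in> {1..n}"
    show "\<bar>x i\<bar> \<le> 1"
    proof (cases "i \<in> dom \<sigma>")
      case True
      then obtain s where si: "\<sigma> i = Some s" by blast
      then show ?thesis using vs[OF si] signvecs_D[OF s si] by auto
    next
      case False then show ?thesis using xb i by blast
    qed
  next
    fix i assume i: "i \<notin> {1..n}"
    then have "i \<notin> {1..n} - dom \<sigma>" by blast
    then show "x i = 0" using xo[of i] signvecs_None[OF s i] by (simp add: cval_def)
  qed
qed

lemma F3:
  assumes s: "\<sigma> \<in> signvecs n" and x: "x \<in> face n \<sigma>"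
  shows "x \<in> dface n \<sigma> \<longleftrightarrow> sgnv n x \<noteq> \<sigma>"
proof
  assume "x \<in> dface n \<sigma>"
  then have "\<exists>i\<in>{1..n} - dom \<sigma>. \<bar>x i\<bar> = 1" by (simp add: dface_def dfc_def)
  then obtain i where i: "i \<in> {1..n} - dom \<sigma>" "\<bar>x i\<bar> = 1" by blast
  then have "sgnv n x i \<noteq> None" by (auto simp: sgnv_def abs_if split: if_splits)
  moreover have "\<sigma> i = None" using i by blast
  ultimately show "sgnv n x \<noteq> \<sigma>" by metis
next
  assume ne: "sgnv n x \<noteq> \<sigma>"
  have le: "\<sigma> \<subseteq>\<^sub>m sgnv n x" by (rule F2[OF s x])
  obtain i where i: "sgnv n x i \<noteq> \<sigma> i" using ne by blast
  then have "\<sigma> i = None"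
    using le unfolding map_le_def by (metis domIff)
  moreover then have "sgnv n x i \<noteq> None" using i by simp
  ultimately have "i \<in> {1..n} - dom \<sigma>" "\<bar>x i\<bar> = 1"
    by (auto simp: sgnv_def split: if_splits)
  then show "x \<in> dface n \<sigma>" using x by (auto simp: dface_def dfc_def face_def)
qed

lemma finite_signvecs: "finite (signvecs n)"
proof -
  have "signvecs n \<subseteq> (\<Union>A\<in>Pow {1..n}. {m. dom m = A \<and> ran m \<subseteq> {-1, 1::int}})"
    unfolding signvecs_def by auto
  moreover have "finite (\<Union>A\<in>Pow {1..n}. {m. dom m = A \<and> ran m \<subseteq> {-1, 1::int}})"
    by (intro finite_UN_I finite_Pow_iff[THEN iffD2] finite_set_of_finite_maps) (auto intro: finite_subset)
  ultimately show ?thesis by (rule finite_subset)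
qed

lemma closed_fc: "closedin PT (fc J c)"
proof -
  have "fc J c = \<Inter> ((\<lambda>i. {x \<in> topspace PT. x i \<in> (if i \<in> J then {-1..1} else {c i})}) ` UNIV)"
    by (auto simp: fc_def topspace_product_topology abs_le_iff split: if_splits)
  also have "closedin PT \<dots>"
  proof (rule closedin_Inter)
    show "(\<lambda>i. {x \<in> topspace PT. x i \<in> (if i \<in> J then {-1..1} else {c i})}) ` UNIV \<noteq> {}" by simp
    fix K assume "K \<in> (\<lambda>i. {x \<in> topspace PT. x i \<in> (if i \<in> J then {-1..1} else {c i})}) ` UNIV"
    then obtain i where K: "K = {x \<in> topspace PT. x i \<in> (if i \<in> J then {-1..1} else {c i})}" by blast
    have "closedin euclideanreal (if i \<in> J then {-1..1} else {c i})" by auto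
    then show "closedin PT K" unfolding K by (rule closedin_continuous_map_preimage[OF cm_proj])
  qed
  finally show ?thesis .
qed



lemma face_step:
  assumes sub: "C \<sigma> \<subseteq> topspace X" and kc: "k_connected X (int n - int (card (dom \<sigma>)) - 1) (C \<sigma>)"
    and s: "\<sigma> \<in> signvecs n"
    and f: "continuous_map (subtopology PT (dface n \<sigma>)) (subtopology X (C \<sigma>)) f"
  shows "\<exists>g. continuous_map (subtopology PT (face n \<sigma>)) (subtopology X (C \<sigma>)) g \<and> (\<forall>x\<in>dface n \<sigma>. g x = f x)"
proof (cases "{1..n} - dom \<sigma> = {}")
  case True
  have "C \<sigma> \<noteq> {}" using kc by (simp add: k_connected_def)
  then obtain a where a: "a \<in> C \<sigma>" by blast
  have "continuous_map (subtopology PT (face n \<sigma>)) (subtopology X (C \<sigma>)) (\<lambda>x. a)"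
    using a sub by (auto simp: continuous_map_const)
  moreover have "dface n \<sigma> = {}" unfolding dface_def dfc_def True by simp
  ultimately show ?thesis by blast
next
  case False
  define J where "J = {1..n} - dom \<sigma>"
  have dsub: "dom \<sigma> \<subseteq> {1..n}" using s by (simp add: signvecs_def)
  have fin: "finite J" unfolding J_def by simp
  have "card J = card {1..n} - card (dom \<sigma>)" unfolding J_def
    using dsub by (intro card_Diff_subset) (auto intro: finite_subset)
  moreover have "card (dom \<sigma>) \<le> n" using dsub card_mono[of "{1..n}" "dom \<sigma>"] by simp
  ultimately have cJ: "int (card J) - 1 \<le> int n - int (card (dom \<sigma>)) - 1" by simp
  have ext: "\<exists>g. continuous_map (subtopology PT (jball J)) (subtopology X (C \<sigma>)) g \<and> (\<forall>x\<in>jsph J. g x = h x)"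
    if "continuous_map (subtopology PT (jsph J)) (subtopology X (C \<sigma>)) h" for h
    using kconn_ext[OF kc fin _ cJ that] False J_def by metis
  show ?thesis
    using face_ext[OF fin _ ext, where c="cval \<sigma>" and f=f] f False by (simp add: J_def face_def dface_def)
qed

lemma skel:
  assumes sub: "\<forall>\<sigma>\<in>signvecs n. C \<sigma> \<subseteq> topspace X"
    and conn: "\<forall>\<sigma>\<in>signvecs n. k_connected X (int n - int (card (dom \<sigma>)) - 1) (C \<sigma>)"
    and mono: "\<forall>\<sigma>1\<in>signvecs n. \<forall>\<sigma>2\<in>signvecs n. \<sigma>1 \<subseteq>\<^sub>m \<sigma>2 \<longrightarrow> C \<sigma>2 \<subseteq> C \<sigma>1"
  shows "T \<subseteq> signvecs n \<Longrightarrow> (\<forall>\<sigma>\<in>T. \<forall>\<tau>\<in>signvecs n. \<sigma> \<subseteq>\<^sub>m \<tau> \<longrightarrow> \<tau> \<in> T) \<Longrightarrow>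
    \<exists>f. continuous_map (subtopology PT (\<Union>\<sigma>\<in>T. face n \<sigma>)) X f \<and>
        (\<forall>x\<in>(\<Union>\<sigma>\<in>T. face n \<sigma>). f x \<in> C (sgnv n x))"
proof (induction "card T" arbitrary: T rule: less_induct)
  case less
  note Tsub = less.prems(1) and down = less.prems(2)
  have finT: "finite T" using Tsub finite_signvecs by (rule finite_subset)
  show ?case
  proof (cases "T = {}")
    case True
    then show ?thesis by (simp add: continuous_map_on_empty)
  next
    case False
    then obtain \<sigma>0 where "\<sigma>0 \<in> T" by blast
    then obtain \<sigma> where \<sigma>T: "\<sigma> \<in> T" and minim: "\<And>\<tau>. \<tau> \<in> T \<Longrightarrow> card (dom \<sigma>) \<le> card (dom \<tau>)"
      using ex_has_least_nat[of "\<lambda>\<tau>. \<tau> \<in> T" \<sigma>0 "\<lambda>\<tau>. card (dom \<tau>)"] by blast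
    have s: "\<sigma> \<in> signvecs n" using \<sigma>T Tsub by blast
    have below: "\<tau> = \<sigma>" if "\<tau> \<in> T" "\<tau> \<subseteq>\<^sub>m \<sigma>" for \<tau>
    proof (rule ccontr)
      assume ne: "\<tau> \<noteq> \<sigma>"
      have d1: "dom \<tau> \<subseteq> dom \<sigma>" using that(2) by (rule map_le_implies_dom_le)
      have "dom \<tau> \<noteq> dom \<sigma>"
      proof
        assume "dom \<tau> = dom \<sigma>"
        then have "\<sigma> \<subseteq>\<^sub>m \<tau>" using that(2) unfolding map_le_def by auto
        then show False using ne that(2) map_le_antisym by blast
      qed
      then have "dom \<tau> \<subset> dom \<sigma>" using d1 by blast
      moreover have "finite (dom \<sigma>)" using s unfolding signvecs_def by (auto intro: finite_subset)
      ultimately have "card (dom \<tau>) < card (dom \<sigma>)" by (rule psubset_card_mono[rotated])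
      then show False using minim[OF that(1)] by simp
    qed
    define T' where "T' = T - {\<sigma>}"
    have "card T > 0" using finT \<sigma>T card_gt_0_iff by blast
    then have cT': "card T' < card T" unfolding T'_def using finT \<sigma>T by simp
    have T'sub: "T' \<subseteq> signvecs n" using Tsub T'_def by blast
    have down': "\<forall>\<tau>\<in>T'. \<forall>\<rho>\<in>signvecs n. \<tau> \<subseteq>\<^sub>m \<rho> \<longrightarrow> \<rho> \<in> T'"
    proof (intro ballI impI)
      fix \<tau> \<rho> assume t: "\<tau> \<in> T'" and r: "\<rho> \<in> signvecs n" and le: "\<tau> \<subseteq>\<^sub>m \<rho>"
      have "\<rho> \<in> T" using down t r le unfolding T'_def by blast
      moreover have "\<rho> \<noteq> \<sigma>"
      proof
        assume "\<rho> = \<sigma>"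
        then have "\<tau> = \<sigma>" using below[of \<tau>] t le unfolding T'_def by blast
        then show False using t T'_def by blast
      qed
      ultimately show "\<rho> \<in> T'" unfolding T'_def by blast
    qed
    obtain f' where f'c: "continuous_map (subtopology PT (\<Union>\<tau>\<in>T'. face n \<tau>)) X f'"
      and f'C: "\<forall>x\<in>(\<Union>\<tau>\<in>T'. face n \<tau>). f' x \<in> C (sgnv n x)"
      using less.hyps[OF cT' T'sub down'] by blast
    define U' where "U' = (\<Union>\<tau>\<in>T'. face n \<tau>)"
    define U where "U = (\<Union>\<tau>\<in>T. face n \<tau>)"
    have UU: "U = U' \<union> face n \<sigma>" unfolding U_def U'_def T'_def using \<sigma>T by blast
    have dface_face: "dface n \<sigma> \<subseteq> face n \<sigma>" by (auto simp: dface_def face_def dfc_def)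
    have inU': "x \<in> U'" if x: "x \<in> dface n \<sigma>" for x
    proof -
      have xf: "x \<in> face n \<sigma>" using x dface_face by blast
      have "sgnv n x \<noteq> \<sigma>" using F3[OF s xf] x by blast
      moreover have "sgnv n x \<in> T" using down \<sigma>T sgnv_in F2(2)[OF s xf] by blast
      moreover have "x \<in> face n (sgnv n x)" using F1 F2(1)[OF s xf] by blast
      ultimately show ?thesis unfolding U'_def T'_def by blast
    qed
    have cap: "x \<in> dface n \<sigma>" if xfs: "x \<in> face n \<sigma>" and xu: "x \<in> U'" for x
    proof -
      obtain \<tau> where t: "\<tau> \<in> T'" "x \<in> face n \<tau>" using xu unfolding U'_def by blast
      have "sgnv n x \<noteq> \<sigma>"
      proof
        assume eq: "sgnv n x = \<sigma>"
        have "\<tau> \<subseteq>\<^sub>m sgnv n x" using F2(2)[OF _ t(2)] t(1) T'sub by blast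
        then have "\<tau> = \<sigma>" using below[of \<tau>] t(1) eq unfolding T'_def by blast
        then show False using t(1) T'_def by blast
      qed
      then show ?thesis using F3[OF s xfs] by blast
    qed
    have fd: "continuous_map (subtopology PT (dface n \<sigma>)) (subtopology X (C \<sigma>)) f'"
      unfolding continuous_map_in_subtopology
    proof
      show "continuous_map (subtopology PT (dface n \<sigma>)) X f'"
        using continuous_map_from_subtopology_mono[OF f'c[folded U'_def]] inU' by blast
      show "f' \<in> topspace (subtopology PT (dface n \<sigma>)) \<rightarrow> C \<sigma>"
      proof
        fix x assume "x \<in> topspace (subtopology PT (dface n \<sigma>))"
        then have x: "x \<in> dface n \<sigma>" by simp
        then have xf: "x \<in> face n \<sigma>" using dface_face by blast
        have "f' x \<in> C (sgnv n x)" using f'C inU'[OF x] U'_def by blast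
        also have "C (sgnv n x) \<subseteq> C \<sigma>" using mono s sgnv_in F2(2)[OF s xf] by blast
        finally show "f' x \<in> C \<sigma>" .
      qed
    qed
    obtain g where gc: "continuous_map (subtopology PT (face n \<sigma>)) (subtopology X (C \<sigma>)) g"
      and geq: "\<forall>x\<in>dface n \<sigma>. g x = f' x"
      using face_step[of C \<sigma> X n f'] sub conn s fd by blast
    define h where "h x = (if x \<in> face n \<sigma> then g x else f' x)" for x
    have hc: "continuous_map (subtopology PT U) X h"
    proof (rule pasting_lemma_closed[where I="{True, False}" and T="\<lambda>b. if b then face n \<sigma> else U'"
          and f="\<lambda>b. if b then g else f'"])
      show "finite {True, False}" by simp
      have cl1: "closedin PT (face n \<sigma>)" unfolding face_def by (rule closed_fc)
      have cl2: "closedin PT U'" unfolding U'_def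
        using finite_subset[OF T'sub finite_signvecs] by (intro closedin_Union) (auto simp: face_def closed_fc)
      fix b :: bool assume "b \<in> {True, False}"
      show "closedin (subtopology PT U) (if b then face n \<sigma> else U')"
        unfolding closedin_subtopology using cl1 cl2 UU by (cases b) auto
      show "continuous_map (subtopology (subtopology PT U) (if b then face n \<sigma> else U')) X (if b then g else f')"
      proof (cases b)
        case True
        have "U \<inter> face n \<sigma> = face n \<sigma>" using UU by blast
        then show ?thesis using True gc by (simp add: subtopology_subtopology continuous_map_in_subtopology)
      next
        case False
        have "U \<inter> U' = U'" using UU by blast
        then show ?thesis using False f'c by (simp add: subtopology_subtopology U'_def)
      qed
    next
      fix i j x
      assume "i \<in> {True, False}" "j \<in> {True, False}"
        "x \<in> topspace (subtopology PT U) \<inter> (if i then face n \<sigma> else U') \<inter> (if j then face n \<sigma> else U')"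
      then show "(if i then g else f') x = (if j then g else f') x"
        using cap geq by (cases i; cases j) auto
    next
      fix x assume "x \<in> topspace (subtopology PT U)"
      then have "x \<in> U" by simp
      then show "\<exists>j. j \<in> {True, False} \<and> x \<in> (if j then face n \<sigma> else U') \<and> h x = (if j then g else f') x"
        using UU unfolding h_def by (cases "x \<in> face n \<sigma>") auto
    qed
    have hC: "h x \<in> C (sgnv n x)" if x: "x \<in> U" for x
    proof (cases "x \<in> face n \<sigma>")
      case True
      show ?thesis
      proof (cases "x \<in> dface n \<sigma>")
        case True
        then show ?thesis using geq inU' f'C dface_face unfolding h_def U'_def by auto
      next
        case False
        then have "sgnv n x = \<sigma>" using F3[OF s \<open>x \<in> face n \<sigma>\<close>] by blast
        moreover have "g x \<in> C \<sigma>" using gc True by (auto simp: continuous_map_in_subtopology)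
        ultimately show ?thesis using True unfolding h_def by simp
      qed
    next
      case False
      then have "x \<in> U'" using UU x by blast
      then show ?thesis using False f'C unfolding h_def U'_def by auto
    qed
    show ?thesis using hc hC unfolding U_def by blast
  qed
qed



definition nor :: "nat set \<Rightarrow> (nat \<Rightarrow> real) \<Rightarrow> (nat \<Rightarrow> real)" where
  "nor I w = (\<lambda>i. if i \<in> I then w i / nrm I w else 0)"

lemma nrm_pos:
  assumes "finite I" "i \<in> I" "w i \<noteq> 0" shows "nrm I w > 0"
proof -
  have "0 < (\<Sum>j\<in>I. w j ^ 2)" using assms by (intro sum_pos2[of I i]) auto
  then show ?thesis unfolding nrm_def by simp
qed

lemma cont_nor:
  assumes fin: "finite I"
    and wc: "\<And>i. i \<in> I \<Longrightarrow> continuous_map T euclideanreal (\<lambda>x. w x i)"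
    and nz: "\<And>x. x \<in> topspace T \<Longrightarrow> \<exists>i\<in>I. w x i \<noteq> 0"
  shows "continuous_map T (subtopology PT (jsph I)) (\<lambda>x. nor I (w x))"
proof (rule cm_into_PT)
  have pos: "nrm I (w x) > 0" if "x \<in> topspace T" for x
    using nz[OF that] nrm_pos[OF fin] by blast
  have nc: "continuous_map T euclideanreal (\<lambda>x. nrm I (w x))"
    unfolding nrm_def
    by (intro continuous_map_sqrt continuous_map_sum continuous_map_real_pow wc fin) auto
  fix i
  show "continuous_map T euclideanreal (\<lambda>x. nor I (w x) i)"
  proof (cases "i \<in> I")
    case True
    have "continuous_map T euclideanreal (\<lambda>x. w x i / nrm I (w x))"
      by (rule continuous_map_real_divide[OF wc[OF True] nc]) (use pos in force)
    then show ?thesis using True by (simp add: nor_def)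
  next
    case False then show ?thesis by (simp add: nor_def)
  qed
next
  fix x assume x: "x \<in> topspace T"
  have p: "nrm I (w x) > 0" using nz[OF x] nrm_pos[OF fin] by blast
  have "(\<Sum>i\<in>I. nor I (w x) i ^ 2) = (\<Sum>i\<in>I. (w x i / nrm I (w x)) ^ 2)" by (simp add: nor_def)
  also have "\<dots> = nrm I (w x) ^ 2 / nrm I (w x) ^ 2" by (simp only: sum_scaled nrm_sq)
  also have "\<dots> = 1" using p by simp
  finally show "nor I (w x) \<in> jsph I" unfolding jsph_def by (simp add: nor_def)
qed

lemma homot_from_map:
  assumes "continuous_map (prod_topology (top_of_set {0..1::real}) X) Y h"
  shows "homotopic_with (\<lambda>_. True) X Y (\<lambda>x. h (0, x)) (\<lambda>x. h (1, x))"
  unfolding homotopic_with_def by (rule exI[where x=h]) (simp add: assms)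

lemma cm_fst_real: "continuous_map (prod_topology (top_of_set {0..1::real}) X) euclideanreal fst"
  using continuous_map_fst continuous_map_into_fulltopology by blast

lemma cm_snd_coord: "continuous_map (prod_topology Z (subtopology PT S)) euclideanreal (\<lambda>p. snd p i)"
  using continuous_map_compose[OF continuous_map_snd cm_proj_sub, of Z S i] by (simp add: o_def)



definition sc :: "real \<Rightarrow> (nat \<Rightarrow> real) \<Rightarrow> (nat \<Rightarrow> real)" where
  "sc a x = (\<lambda>i. a * x i)"

lemma nor_sph: assumes "z \<in> jsph I" shows "nor I z = z"
proof -
  have "nrm I z = 1" using assms by (simp add: nrm_def jsph_def)
  then show ?thesis using assms by (auto simp: nor_def jsph_def fun_eq_iff)
qed

lemma nor_cong: "(\<And>i. i \<in> I \<Longrightarrow> w i = v i) \<Longrightarrow> nor I w = nor I v"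
proof -
  assume a: "\<And>i. i \<in> I \<Longrightarrow> w i = v i"
  then have "nrm I w = nrm I v" unfolding nrm_def by (metis (no_types, lifting) sum.cong)
  then show ?thesis using a by (auto simp: nor_def fun_eq_iff)
qed

lemma PM:
  assumes fin: "finite I" and ne: "I \<noteq> {}"
    and qc: "\<And>i. i \<in> I \<Longrightarrow> continuous_map (subtopology PT (fc I (\<lambda>_. 0))) euclideanreal (q i)"
    and qpos: "\<And>i x. i \<in> I \<Longrightarrow> x \<in> fc I (\<lambda>_. 0) \<Longrightarrow> x i = 1 \<Longrightarrow> q i x \<ge> 0"
    and qneg: "\<And>i x. i \<in> I \<Longrightarrow> x \<in> fc I (\<lambda>_. 0) \<Longrightarrow> x i = -1 \<Longrightarrow> q i x \<le> 0"
  shows "\<exists>x\<in>fc I (\<lambda>_. 0). \<forall>i\<in>I. q i x = 0"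
proof (rule ccontr)
  define K where "K = fc I (\<lambda>_. 0)"
  assume "\<not> ?thesis"
  then have nz: "\<And>x. x \<in> K \<Longrightarrow> \<exists>i\<in>I. q i x \<noteq> 0" unfolding K_def by blast
  define X0 where "X0 = subtopology PT (jsph I)"
  define ps where "ps = psi I (\<lambda>_. 0::real)"
  have pc: "continuous_map X0 (subtopology PT (dfc I (\<lambda>_. 0))) ps"
    unfolding X0_def ps_def by (rule psi_cont[OF fin ne])
  have psd: "ps z \<in> dfc I (\<lambda>_. 0)" if "z \<in> jsph I" for z
    using pc that unfolding continuous_map_in_subtopology X0_def by auto
  have psK: "continuous_map X0 (subtopology PT K) ps"
    using pc psd unfolding continuous_map_in_subtopology K_def X0_def dfc_def by auto
  have qps: "continuous_map X0 euclideanreal (\<lambda>z. q i (ps z))" if "i \<in> I" for i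
    using continuous_map_compose[OF psK qc[OF that, folded K_def]] by (simp add: o_def)
  define T where "T = prod_topology (top_of_set {0..1::real}) X0"
  have topT: "topspace T = {0..1} \<times> jsph I" by (simp add: T_def X0_def)
  have cfst: "continuous_map T euclideanreal fst" unfolding T_def by (rule cm_fst_real)
  have csnd: "continuous_map T X0 snd" unfolding T_def by (rule continuous_map_snd)
  define wA where "wA p = (\<lambda>i. (1 - fst p) * snd p i + fst p * q i (ps (snd p)))" for p
  have contA: "continuous_map T X0 (\<lambda>p. nor I (wA p))"
    unfolding X0_def
  proof (rule cont_nor[OF fin])
    fix i assume i: "i \<in> I"
    have c1: "continuous_map T euclideanreal (\<lambda>p. snd p i)"
      unfolding T_def X0_def by (rule cm_snd_coord)
    have c2: "continuous_map T euclideanreal (\<lambda>p. q i (ps (snd p)))"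
      using continuous_map_compose[OF csnd qps[OF i]] by (simp add: o_def)
    show "continuous_map T euclideanreal (\<lambda>p. wA p i)"
      unfolding wA_def
      by (intro continuous_map_add continuous_map_real_mult continuous_map_diff c1 c2 cfst continuous_map_const[THEN iffD2]) auto
  next
    fix p assume "p \<in> topspace T"
    then have t: "fst p \<in> {0..1}" and z: "snd p \<in> jsph I" by (auto simp: topT)
    define tt where "tt = fst p"
    define z0 where "z0 = snd p"
    define x where "x = ps z0"
    have xd: "x \<in> dfc I (\<lambda>_. 0)" unfolding x_def z0_def by (rule psd[OF z])
    then have xK: "x \<in> K" unfolding K_def dfc_def by blast
    have m: "mx I z0 > 0" unfolding z0_def by (rule mx_pos[OF fin ne z])
    obtain i0 where i0: "i0 \<in> I" "\<bar>z0 i0\<bar> = mx I z0" using mx_props(2)[OF fin ne] by blast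
    have xi0: "x i0 = z0 i0 / mx I z0" using i0(1) by (simp add: x_def ps_def psi_def)
    show "\<exists>i\<in>I. wA p i \<noteq> 0"
    proof (rule ccontr)
      assume "\<not> (\<exists>i\<in>I. wA p i \<noteq> 0)"
      then have w0: "\<And>i. i \<in> I \<Longrightarrow> (1 - tt) * z0 i + tt * q i x = 0"
        by (auto simp: wA_def tt_def z0_def x_def)
      show False
      proof (cases "tt = 1")
        case True
        then have "\<forall>i\<in>I. q i x = 0" using w0 by simp
        then show False using nz[OF xK] by blast
      next
        case False
        then have t1: "tt < 1" using t tt_def by simp
        have t0: "tt \<ge> 0" using t tt_def by simp
        have e: "tt * q i0 x = - ((1 - tt) * z0 i0)" using w0[OF i0(1)] by linarith
        show False
        proof (cases "z0 i0 > 0")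
          case True
          then have "x i0 = 1" using xi0 i0(2) m by simp
          then have "q i0 x \<ge> 0" using qpos[OF i0(1)] xK K_def by blast
          then have "tt * q i0 x \<ge> 0" using t0 by simp
          moreover have "(1 - tt) * z0 i0 > 0" using t1 True by simp
          ultimately show False using e by linarith
        next
          case False
          then have neg: "z0 i0 < 0" using i0(2) m by linarith
          then have mz: "mx I z0 = - z0 i0" using i0(2) by simp
          have "x i0 = z0 i0 / (- z0 i0)" using xi0 mz by simp
          also have "\<dots> = -1" using neg by simp
          finally have "x i0 = -1" .
          then have "q i0 x \<le> 0" using qneg[OF i0(1)] xK K_def by blast
          then have "tt * q i0 x \<le> 0" using t0 by (simp add: mult_nonneg_nonpos)
          moreover have "(1 - tt) * z0 i0 < 0" using t1 neg by (simp add: mult_pos_neg)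
          ultimately show False using e by linarith
        qed
      qed
    qed
  qed
  define wB where "wB p = (\<lambda>i. q i (sc (1 - fst p) (ps (snd p))))" for p
  have scK: "sc a x \<in> K" if "a \<in> {0..1}" "x \<in> K" for a x
  proof -
    have "\<bar>a * x i\<bar> \<le> 1" if "i \<in> I" for i
    proof -
      have "\<bar>x i\<bar> \<le> 1" using \<open>x \<in> K\<close> that by (simp add: K_def fc_def)
      moreover have "\<bar>a\<bar> \<le> 1" using \<open>a \<in> {0..1}\<close> by simp
      ultimately have "\<bar>a\<bar> * \<bar>x i\<bar> \<le> 1 * 1" by (intro mult_mono) auto
      then show ?thesis by (simp add: abs_mult)
    qed
    moreover have "a * x i = 0" if "i \<notin> I" for i using \<open>x \<in> K\<close> that by (simp add: K_def fc_def)
    ultimately show ?thesis unfolding K_def fc_def sc_def by auto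
  qed
  have cscK: "continuous_map T (subtopology PT K) (\<lambda>p. sc (1 - fst p) (ps (snd p)))"
  proof (rule cm_into_PT)
    fix i
    have "continuous_map T euclideanreal (\<lambda>p. ps (snd p) i)"
      using continuous_map_compose[OF continuous_map_compose[OF csnd psK] cm_proj_sub[of K i]] by (simp add: o_def)
    then show "continuous_map T euclideanreal (\<lambda>p. sc (1 - fst p) (ps (snd p)) i)"
      unfolding sc_def
      by (intro continuous_map_real_mult continuous_map_diff cfst continuous_map_const[THEN iffD2]) auto
  next
    fix p assume "p \<in> topspace T"
    then have t: "fst p \<in> {0..1}" and z: "snd p \<in> jsph I" by (auto simp: topT)
    have "1 - fst p \<in> {0..1}" using t by simp
    moreover have "ps (snd p) \<in> K" using psd[OF z] by (simp add: K_def dfc_def)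
    ultimately show "sc (1 - fst p) (ps (snd p)) \<in> K" by (rule scK)
  qed
  have contB: "continuous_map T X0 (\<lambda>p. nor I (wB p))"
    unfolding X0_def
  proof (rule cont_nor[OF fin])
    fix i assume i: "i \<in> I"
    show "continuous_map T euclideanreal (\<lambda>p. wB p i)"
      unfolding wB_def using continuous_map_compose[OF cscK qc[OF i, folded K_def]] by (simp add: o_def)
  next
    fix p assume "p \<in> topspace T"
    then have "sc (1 - fst p) (ps (snd p)) \<in> K" using cscK by (auto simp: continuous_map_in_subtopology)
    then show "\<exists>i\<in>I. wB p i \<noteq> 0" unfolding wB_def using nz by blast
  qed
  define G where "G z = nor I (\<lambda>i. q i (ps z))" for z
  define c0 where "c0 = nor I (\<lambda>i. q i (sc 0 (ps undefined)))"
  have hA: "homotopic_with (\<lambda>_. True) X0 X0 (\<lambda>z. nor I (wA (0, z))) (\<lambda>z. nor I (wA (1, z)))"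
    using homot_from_map[OF contA[unfolded T_def]] .
  have hA': "homotopic_with (\<lambda>_. True) X0 X0 id G"
  proof (rule homotopic_with_eq[OF hA])
    fix z assume "z \<in> topspace X0"
    then have z: "z \<in> jsph I" by (simp add: X0_def)
    have "wA (0, z) = z" by (simp add: wA_def)
    then show "id z = nor I (wA (0, z))" using nor_sph[OF z] by simp
    have "wA (1, z) = (\<lambda>i. q i (ps z))" by (simp add: wA_def)
    then show "G z = nor I (wA (1, z))" by (simp add: G_def)
  qed auto
  have hB: "homotopic_with (\<lambda>_. True) X0 X0 (\<lambda>z. nor I (wB (0, z))) (\<lambda>z. nor I (wB (1, z)))"
    using homot_from_map[OF contB[unfolded T_def]] .
  have hB': "homotopic_with (\<lambda>_. True) X0 X0 G (\<lambda>z. c0)"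
  proof (rule homotopic_with_eq[OF hB])
    fix z assume "z \<in> topspace X0"
    have "sc 1 (ps z) = ps z" by (simp add: sc_def)
    then show "G z = nor I (wB (0, z))" by (simp add: G_def wB_def)
    have "sc 0 (ps z) = sc 0 (ps undefined)" by (simp add: sc_def)
    then show "c0 = nor I (wB (1, z))" by (simp add: c0_def wB_def)
  qed auto
  have "contractible_space X0"
    unfolding contractible_space_def using homotopic_with_trans[OF hA' hB'] by blast
  then show False using noncontr_jsph[OF fin ne] X0_def by simp
qed



theorem mainTheorem3:
  fixes X :: "'a topology" and n :: nat and p :: "'a \<Rightarrow> nat \<Rightarrow> real"
    and C :: "(nat \<rightharpoonup> int) \<Rightarrow> 'a set"
  assumes p_cont: "\<forall>i\<in>{1..n}. continuous_map X euclideanreal (\<lambda>y. p y i)"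
    and sub: "\<forall>\<sigma>\<in>signvecs n. C \<sigma> \<subseteq> topspace X"
    and conn: "\<forall>\<sigma>\<in>signvecs n. k_connected X (int n - int (card (dom \<sigma>)) - 1) (C \<sigma>)"
    and mono: "\<forall>\<sigma>1\<in>signvecs n. \<forall>\<sigma>2\<in>signvecs n. \<sigma>1 \<subseteq>\<^sub>m \<sigma>2 \<longrightarrow> C \<sigma>2 \<subseteq> C \<sigma>1"
    and sign: "\<forall>\<sigma>\<in>signvecs n. \<forall>i s. \<sigma> i = Some s \<longrightarrow> (\<forall>y\<in>C \<sigma>. real_of_int s * p y i \<ge> 0)"
  shows "\<exists>y\<in>C Map.empty. \<forall>i\<in>{1..n}. p y i = 0"
proof -
  have e: "Map.empty \<in> signvecs n" by (simp add: signvecs_def)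
  obtain f where fc: "continuous_map (subtopology PT (\<Union>\<sigma>\<in>signvecs n. face n \<sigma>)) X f"
    and fC: "\<forall>x\<in>(\<Union>\<sigma>\<in>signvecs n. face n \<sigma>). f x \<in> C (sgnv n x)"
    using skel[OF sub conn mono, of "signvecs n"] by blast
  have U: "(\<Union>\<sigma>\<in>signvecs n. face n \<sigma>) = face n Map.empty"
    using F2(1) e by blast
  have cv: "cval Map.empty = (\<lambda>_. 0)" by (simp add: cval_def fun_eq_iff)
  have K: "face n Map.empty = fc {1..n} (\<lambda>_. 0)" by (simp add: face_def cv)
  have fc': "continuous_map (subtopology PT (fc {1..n} (\<lambda>_. 0))) X f" using fc U K by simp
  have fC': "f x \<in> C (sgnv n x)" if "x \<in> fc {1..n} (\<lambda>_. 0)" for x using fC U K that by simp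
  have sub0: "C (sgnv n x) \<subseteq> C Map.empty" for x
    using mono e sgnv_in by (simp add: map_le_def)
  show ?thesis
  proof (cases "n = 0")
    case True
    have "C Map.empty \<noteq> {}" using conn e by (simp add: k_connected_def)
    then show ?thesis using True by auto
  next
    case False
    then have ne: "{1..n} \<noteq> {}" by simp
    have "\<exists>x\<in>fc {1..n} (\<lambda>_. 0). \<forall>i\<in>{1..n}. p (f x) i = 0"
    proof (rule PM[where q="\<lambda>i x. p (f x) i"])
      show "finite {1..n}" by simp
      show "{1..n} \<noteq> {}" by (rule ne)
      fix i assume i: "i \<in> {1..n}"
      show "continuous_map (subtopology PT (fc {1..n} (\<lambda>_. 0))) euclideanreal (\<lambda>x. p (f x) i)"
      proof -
        have "continuous_map X euclideanreal (\<lambda>y. p y i)" using p_cont i by blast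
        then show ?thesis using continuous_map_compose[OF fc'] by (simp add: o_def)
      qed
    next
      fix i x assume i: "i \<in> {1..n}" and x: "x \<in> fc {1..n} (\<lambda>_. 0)" and xi: "x i = 1"
      have "sgnv n x i = Some 1" using i xi by (simp add: sgnv_def)
      then have "real_of_int 1 * p (f x) i \<ge> 0" using sign sgnv_in fC'[OF x] by blast
      then show "0 \<le> p (f x) i" by simp
    next
      fix i x assume i: "i \<in> {1..n}" and x: "x \<in> fc {1..n} (\<lambda>_. 0)" and xi: "x i = -1"
      have "sgnv n x i = Some (-1)" using i xi by (simp add: sgnv_def)
      then have "real_of_int (-1) * p (f x) i \<ge> 0" using sign sgnv_in fC'[OF x] by blast
      then show "p (f x) i \<le> 0" by simp
    qed
    then obtain x where x: "x \<in> fc {1..n} (\<lambda>_. 0)" and z: "\<forall>i\<in>{1..n}. p (f x) i = 0" by blast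
    show ?thesis using fC'[OF x] sub0 z by blast
  qed
qed

end
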